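(* Let $t$ be a positive integer, let $M$ be a $t$-spike of order $r$ with associated partition $(A_1,\ldots,A_r)$, and let $C$ be a circuit of $M$. Then either (1) $C = \bigcup_{j \in J}A_j$ for some $t$-element set $J \subseteq \{1,\dots,r\}$, or (2) $\left|\{i \in \{1,\dots,r\} : A_i \cap C \neq \emptyset\}\right| \ge r-(t-2)$ and $\left|\{i \in \{1,\dots,r\} : A_i \subseteq C\}\right| < t$.
   Context: For a positive integer $t$, a matroid $M$ is a $t$-spike of order $r$ (where $r\ge t$) if there is a partition $(A_1,\ldots,A_r)$ of $E(M)$ into 2-element sets, called the associated partition, such that, for every $t$-element subset $J\subseteq\{1,\dots,r\}$, the set $\bigcup_{j\in J}A_j$ is both a circuit and a cocircuit of $M$. *)

theory Defs
  imports Main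
begin

definition matroid :: "'a set \<Rightarrow> ('a set \<Rightarrow> bool) \<Rightarrow> bool" where
  "matroid E indep \<longleftrightarrow>
     finite E \<and>
     (\<forall>X. indep X \<longrightarrow> X \<subseteq> E) \<and>
     indep {} \<and>
     (\<forall>X Y. indep X \<and> Y \<subseteq> X \<longrightarrow> indep Y) \<and>
     (\<forall>X Y. indep X \<and> indep Y \<and> card X < card Y \<longrightarrow>
        (\<exists>y\<in>Y - X. indep (insert y X)))"

definition circuit :: "'a set \<Rightarrow> ('a set \<Rightarrow> bool) \<Rightarrow> 'a set \<Rightarrow> bool" where
  "circuit E indep C \<longleftrightarrow> C \<subseteq> E \<and> \<not> indep C \<and> (\<forall>D. D \<subset> C \<longrightarrow> indep D)"

definition basis :: "'a set \<Rightarrow> ('a set \<Rightarrow> bool) \<Rightarrow> 'a set \<Rightarrow> bool" where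
  "basis E indep B \<longleftrightarrow> indep B \<and> (\<forall>X. indep X \<and> B \<subseteq> X \<longrightarrow> X = B)"

definition dual_indep :: "'a set \<Rightarrow> ('a set \<Rightarrow> bool) \<Rightarrow> 'a set \<Rightarrow> bool" where
  "dual_indep E indep I \<longleftrightarrow> I \<subseteq> E \<and> (\<exists>B. basis E indep B \<and> I \<inter> B = {})"

definition cocircuit :: "'a set \<Rightarrow> ('a set \<Rightarrow> bool) \<Rightarrow> 'a set \<Rightarrow> bool" where
  "cocircuit E indep C \<longleftrightarrow> circuit E (dual_indep E indep) C"

definition is_spike_partition ::
  "nat \<Rightarrow> nat \<Rightarrow> 'a set \<Rightarrow> ('a set \<Rightarrow> bool) \<Rightarrow> (nat \<Rightarrow> 'a set) \<Rightarrow> bool" where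
  "is_spike_partition t r E indep A \<longleftrightarrow>
     matroid E indep \<and> 0 < t \<and> t \<le> r \<and>
     (\<forall>i\<in>{1..r}. card (A i) = 2) \<and>
     (\<forall>i\<in>{1..r}. \<forall>j\<in>{1..r}. i \<noteq> j \<longrightarrow> A i \<inter> A j = {}) \<and>
     (\<Union>i\<in>{1..r}. A i) = E \<and>
     (\<forall>J. J \<subseteq> {1..r} \<and> card J = t \<longrightarrow>
        circuit E indep (\<Union>j\<in>J. A j) \<and> cocircuit E indep (\<Union>j\<in>J. A j))"

end

theory Submission
  imports Defs
begin

lemma m_fin: "matroid E indep \<Longrightarrow> finite E" unfolding matroid_def by simp
lemma m_sub: "matroid E indep \<Longrightarrow> indep X \<Longrightarrow> X \<subseteq> E" unfolding matroid_def by simp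
lemma m_down: "matroid E indep \<Longrightarrow> indep X \<Longrightarrow> Y \<subseteq> X \<Longrightarrow> indep Y"
  unfolding matroid_def by metis
lemma m_aug: "matroid E indep \<Longrightarrow> indep X \<Longrightarrow> indep Y \<Longrightarrow> card X < card Y \<Longrightarrow>
   \<exists>y\<in>Y - X. indep (insert y X)"
  unfolding matroid_def by metis
lemma indep_finite:
  assumes "matroid E indep" "indep X" shows "finite X"
  using m_fin[OF assms(1)] m_sub[OF assms] finite_subset by blast

lemma aug_lemma:
  assumes M: "matroid E indep"
  shows "indep B \<Longrightarrow> indep I \<Longrightarrow> card I + n = card B \<Longrightarrow>
     \<exists>I'. indep I' \<and> I \<subseteq> I' \<and> I' \<subseteq> I \<union> B \<and> card I' = card B"
proof (induction n arbitrary: I)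
  case 0
  then show ?case by auto
next
  case (Suc n)
  then have "card I < card B" by simp
  then obtain y where y: "y \<in> B - I" "indep (insert y I)"
    using m_aug[OF M Suc.prems(2,1)] by blast
  have fI: "finite I" using indep_finite[OF M Suc.prems(2)] .
  have "card (insert y I) + n = card B" using y fI Suc.prems by simp
  from Suc.IH[OF Suc.prems(1) y(2) this] obtain I' where
    "indep I'" "insert y I \<subseteq> I'" "I' \<subseteq> insert y I \<union> B" "card I' = card B" by blast
  then show ?case using y by blast
qed

lemma basis_card:
  assumes M: "matroid E indep" and B: "basis E indep B" and I: "indep I"
    and c: "card I = card B"
  shows "basis E indep I"
  unfolding basis_def
proof (intro conjI allI impI)
  show "indep I" by fact
  fix X assume X: "indep X \<and> I \<subseteq> X"
  show "X = I"
  proof (rule ccontr)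
    assume "X \<noteq> I"
    with X have "I \<subset> X" by blast
    moreover have "finite X" using indep_finite[OF M] X by blast
    ultimately have "card I < card X" by (simp add: psubset_card_mono)
    with c have "card B < card X" by simp
    then obtain y where y: "y \<in> X - B" "indep (insert y B)"
      using m_aug[OF M _ _ \<open>card B < card X\<close>] B X unfolding basis_def by blast
    then have "insert y B = B" using B unfolding basis_def by blast
    with y show False by blast
  qed
qed

lemma orth:
  assumes M: "matroid E indep" and C: "circuit E indep C"
    and D: "cocircuit E indep D" and CD: "C \<inter> D = {e}"
  shows False
proof -
  have D': "circuit E (dual_indep E indep) D" using D unfolding cocircuit_def .
  have Dd1: "\<not> dual_indep E indep D" using D' unfolding circuit_def by simp
  have Dd0: "D \<subseteq> E" using D' unfolding circuit_def by simp
  have Dd3: "\<And>D'. D' \<subset> D \<Longrightarrow> dual_indep E indep D'" using D' unfolding circuit_def by simp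
  have Cc2: "\<not> indep C" using C unfolding circuit_def by simp
  have Cc3: "\<And>D'. D' \<subset> C \<Longrightarrow> indep D'" using C unfolding circuit_def by simp
  have eD: "e \<in> D" and eC: "e \<in> C" using CD by auto
  have "D - {e} \<subset> D" using eD by blast
  then have "dual_indep E indep (D - {e})" by (rule Dd3)
  then obtain B where B: "basis E indep B" "(D - {e}) \<inter> B = {}"
    unfolding dual_indep_def by blast
  have iB: "indep B" using B unfolding basis_def by simp
  have Bmax: "\<And>X. indep X \<Longrightarrow> B \<subseteq> X \<Longrightarrow> X = B" using B(1) unfolding basis_def by simp
  have "C - {e} \<subset> C" using eC by blast
  then have iC: "indep (C - {e})" by (rule Cc3)
  have le: "card (C - {e}) \<le> card B"
  proof (rule ccontr)
    assume "\<not> ?thesis"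
    then have "card B < card (C - {e})" by simp
    then obtain y where y: "y \<in> (C - {e}) - B" "indep (insert y B)"
      using m_aug[OF M iB iC] by blast
    then have "insert y B = B" using Bmax by (meson subset_insertI)
    with y show False by blast
  qed
  have "card (C - {e}) + (card B - card (C - {e})) = card B" using le by simp
  from aug_lemma[OF M iB iC this] obtain I where
    I: "indep I" "C - {e} \<subseteq> I" "I \<subseteq> (C - {e}) \<union> B" "card I = card B" by blast
  show False
  proof (cases "e \<in> I")
    case True
    then have "C \<subseteq> I" using I(2) by blast
    then have "indep C" using m_down[OF M I(1)] by blast
    with Cc2 show False by blast
  next
    case False
    have bI: "basis E indep I" using basis_card[OF M B(1) I(1) I(4)] .
    have "D \<inter> I = {}" using False I(3) B(2) CD by blast
    then have "dual_indep E indep D" using Dd0 bI unfolding dual_indep_def by blast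
    with Dd1 show False by blast
  qed
qed

theorem lemma6p3:
  fixes t r :: nat and E :: "'a set" and indep :: "'a set \<Rightarrow> bool"
    and A :: "nat \<Rightarrow> 'a set" and C :: "'a set"
  assumes "is_spike_partition t r E indep A"
    and "circuit E indep C"
  shows "(\<exists>J. J \<subseteq> {1..r} \<and> card J = t \<and> C = (\<Union>j\<in>J. A j)) \<or>
         (int (card {i\<in>{1..r}. A i \<inter> C \<noteq> {}}) \<ge> int r - (int t - 2) \<and>
          card {i\<in>{1..r}. A i \<subseteq> C} < t)"
proof -
  have M: "matroid E indep" and t0: "0 < t" and tr: "t \<le> r"
    and c2: "\<And>i. i\<in>{1..r} \<Longrightarrow> card (A i) = 2"
    and dis: "\<And>i j. i\<in>{1..r} \<Longrightarrow> j\<in>{1..r} \<Longrightarrow> i \<noteq> j \<Longrightarrow> A i \<inter> A j = {}"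
    and cov: "(\<Union>i\<in>{1..r}. A i) = E"
    and cc: "\<And>J. J \<subseteq> {1..r} \<Longrightarrow> card J = t \<Longrightarrow>
        circuit E indep (\<Union>j\<in>J. A j) \<and> cocircuit E indep (\<Union>j\<in>J. A j)"
    using assms(1) unfolding is_spike_partition_def by auto
  have Cc: "C \<subseteq> E" "\<not> indep C" "\<And>D'. D' \<subset> C \<Longrightarrow> indep D'"
    using assms(2) unfolding circuit_def by auto
  show ?thesis
  proof (cases "\<exists>J. J \<subseteq> {1..r} \<and> card J = t \<and> (\<Union>j\<in>J. A j) \<subseteq> C")
    case True
    then obtain J where J: "J \<subseteq> {1..r}" "card J = t" "(\<Union>j\<in>J. A j) \<subseteq> C" by blast
    have "C = (\<Union>j\<in>J. A j)"
    proof (rule ccontr)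
      assume "C \<noteq> (\<Union>j\<in>J. A j)"
      with J(3) have "indep (\<Union>j\<in>J. A j)" using Cc(3) by blast
      with cc[OF J(1,2)] show False unfolding circuit_def by blast
    qed
    with J show ?thesis by blast
  next
    case False
    note nJ = False
    define F where "F = {i\<in>{1..r}. A i \<subseteq> C}"
    define Met where "Met = {i\<in>{1..r}. A i \<inter> C \<noteq> {}}"
    have F: "card F < t"
    proof (rule ccontr)
      assume "\<not> ?thesis"
      then have "t \<le> card F" by simp
      then obtain J where "J \<subseteq> F" "card J = t" using obtain_subset_with_card_n by metis
      then show False using nJ unfolding F_def by blast
    qed
    have Met: "int (card Met) \<ge> int r - (int t - 2)"
    proof (rule ccontr)
      assume "\<not> ?thesis"
      then have cm: "card Met + t \<le> r + 1" by linarith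
      have fM: "finite Met" unfolding Met_def by simp
      have MS: "Met \<subseteq> {1..r}" unfolding Met_def by blast
      have cU: "card ({1..r} - Met) = r - card Met"
        using card_Diff_subset[OF fM MS] by simp
      show False
      proof (cases "\<exists>k\<in>{1..r}. A k \<inter> C \<noteq> {} \<and> \<not> A k \<subseteq> C")
        case True
        then obtain k where k: "k\<in>{1..r}" "A k \<inter> C \<noteq> {}" "\<not> A k \<subseteq> C" by blast
        have fA: "finite (A k)" using c2[OF k(1)] card.infinite by fastforce
        have "card (A k \<inter> C) < card (A k)"
          using k(3) fA by (meson Int_lower1 inf.absorb_iff1 psubset_card_mono psubsetI)
        moreover have "card (A k \<inter> C) \<noteq> 0" using k(2) fA by simp
        ultimately have "card (A k \<inter> C) = 1" using c2[OF k(1)] by simp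
        then obtain e where e: "A k \<inter> C = {e}" using card_1_singletonE by blast
        have "t - 1 \<le> card ({1..r} - Met)" using cU cm by simp
        then obtain S where S: "S \<subseteq> {1..r} - Met" "card S = t - 1"
          using obtain_subset_with_card_n by metis
        have kS: "k \<notin> S" using S k unfolding Met_def by blast
        have fS: "finite S" using S(1) finite_subset by blast
        have J: "insert k S \<subseteq> {1..r}" "card (insert k S) = t"
          using S k kS fS t0 by auto
        have "C \<inter> (\<Union>j\<in>insert k S. A j) = {e}"
          using e S unfolding Met_def by auto
        then show False using orth[OF M assms(2)] cc[OF J] by blast
      next
        case False
        have CM: "C \<subseteq> (\<Union>j\<in>Met. A j)" using Cc(1) cov unfolding Met_def by blast
        have "Met \<subseteq> F" using False unfolding Met_def F_def by blast
        then have "card Met \<le> card F" by (simp add: card_mono F_def)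
        with F have ct: "card Met < t" by simp
        then have "t - card Met \<le> card ({1..r} - Met)" using cU tr by simp
        then obtain S where S: "S \<subseteq> {1..r} - Met" "card S = t - card Met"
          using obtain_subset_with_card_n by metis
        have fS: "finite S" using S(1) finite_subset by blast
        have J: "Met \<union> S \<subseteq> {1..r}" unfolding Met_def using S by blast
        have "card (Met \<union> S) = card Met + card S"
          using card_Un_disjoint[OF fM fS] S by blast
        with S ct have cJ: "card (Met \<union> S) = t" by simp
        have sub: "C \<subseteq> (\<Union>j\<in>Met \<union> S. A j)" using CM by blast
        have "C \<noteq> (\<Union>j\<in>Met \<union> S. A j)" using nJ J cJ by blast
        with sub have "C \<subset> (\<Union>j\<in>Met \<union> S. A j)" by blast
        moreover have "circuit E indep (\<Union>j\<in>Met \<union> S. A j)" using cc[OF J cJ] by blast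
        ultimately have "indep C" unfolding circuit_def by blast
        with Cc(2) show False by blast
      qed
    qed
    show ?thesis using F Met unfolding F_def Met_def by blast
  qed
qed

end
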